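(* Let $G$ be a connected triangle-free graph of order $n$, minimum degree $\delta \geq 3$ and maximum degree $\Delta$, and let $N=n-\Delta+\delta$. Then \[ \mu(G) \leq \frac{2}{3}\cdot\frac{N(N-1)}{n(n-1)}\cdot\frac{n+2\Delta}{\delta} + 7 . \]
   Context: A graph is triangle-free if it contains no $K_3$ as a subgraph. For a connected graph $G$ of order $n\ge2$, $W(G)=\sum_{\{u,v\}\subseteq V(G)} d_G(u,v)$ is the Wiener index (sum of shortest-path distances over unordered pairs of distinct vertices) and $\mu(G)=\binom{n}{2}^{-1}W(G)$ is the average distance. *)

theory Defs
  imports Complex_Main
begin

definition simple_graph :: "'a set \<Rightarrow> ('a \<Rightarrow> 'a \<Rightarrow> bool) \<Rightarrow> bool" where
  "simple_graph V E \<longleftrightarrow> finite V \<and> (\<forall>u v. E u v \<longrightarrow> u \<in> V \<and> v \<in> V)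
      \<and> (\<forall>u v. E u v \<longrightarrow> E v u) \<and> (\<forall>v. \<not> E v v)"

fun is_walk :: "'a set \<Rightarrow> ('a \<Rightarrow> 'a \<Rightarrow> bool) \<Rightarrow> 'a list \<Rightarrow> bool" where
  "is_walk V E [] = False"
| "is_walk V E [v] = (v \<in> V)"
| "is_walk V E (u # v # xs) = (u \<in> V \<and> E u v \<and> is_walk V E (v # xs))"

definition walk_between :: "'a set \<Rightarrow> ('a \<Rightarrow> 'a \<Rightarrow> bool) \<Rightarrow> 'a \<Rightarrow> 'a \<Rightarrow> 'a list \<Rightarrow> bool" where
  "walk_between V E u v xs \<longleftrightarrow> is_walk V E xs \<and> hd xs = u \<and> last xs = v"

definition graph_connected :: "'a set \<Rightarrow> ('a \<Rightarrow> 'a \<Rightarrow> bool) \<Rightarrow> bool" where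
  "graph_connected V E \<longleftrightarrow> (\<forall>u\<in>V. \<forall>v\<in>V. \<exists>xs. walk_between V E u v xs)"

definition gdist :: "'a set \<Rightarrow> ('a \<Rightarrow> 'a \<Rightarrow> bool) \<Rightarrow> 'a \<Rightarrow> 'a \<Rightarrow> nat" where
  "gdist V E u v = (LEAST k. \<exists>xs. walk_between V E u v xs \<and> length xs = Suc k)"

definition degree :: "'a set \<Rightarrow> ('a \<Rightarrow> 'a \<Rightarrow> bool) \<Rightarrow> 'a \<Rightarrow> nat" where
  "degree V E v = card {u \<in> V. E v u}"

definition min_degree :: "'a set \<Rightarrow> ('a \<Rightarrow> 'a \<Rightarrow> bool) \<Rightarrow> nat" where
  "min_degree V E = Min (degree V E ` V)"

definition max_degree :: "'a set \<Rightarrow> ('a \<Rightarrow> 'a \<Rightarrow> bool) \<Rightarrow> nat" where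
  "max_degree V E = Max (degree V E ` V)"

definition triangle_free :: "'a set \<Rightarrow> ('a \<Rightarrow> 'a \<Rightarrow> bool) \<Rightarrow> bool" where
  "triangle_free V E \<longleftrightarrow> \<not> (\<exists>a\<in>V. \<exists>b\<in>V. \<exists>c\<in>V. E a b \<and> E b c \<and> E a c)"

text \<open>Wiener index: sum of distances over unordered pairs of distinct vertices.\<close>
definition wiener :: "'a set \<Rightarrow> ('a \<Rightarrow> 'a \<Rightarrow> bool) \<Rightarrow> nat" where
  "wiener V E = (\<Sum>p\<in>{{u, v} | u v. u \<in> V \<and> v \<in> V \<and> u \<noteq> v}.
      gdist V E (SOME u. u \<in> p) (SOME v. v \<in> p \<and> v \<noteq> (SOME u. u \<in> p)))"

definition avg_dist :: "'a set \<Rightarrow> ('a \<Rightarrow> 'a \<Rightarrow> bool) \<Rightarrow> real" where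
  "avg_dist V E = real (wiener V E) / real (card V choose 2)"

end

theory Submission
  imports Defs
begin
definition pth :: "'a set \<Rightarrow> ('a \<Rightarrow> 'a \<Rightarrow> bool) \<Rightarrow> nat \<Rightarrow> 'a \<Rightarrow> 'a \<Rightarrow> bool" where
  "pth V E k u v \<longleftrightarrow> (\<exists>p. p 0 = u \<and> p k = v \<and> (\<forall>i\<le>k. p i \<in> V) \<and> (\<forall>i<k. E (p i) (p (Suc i))))"

lemma is_walk_nth:
  "is_walk V E xs \<longleftrightarrow> xs \<noteq> [] \<and> (\<forall>i<length xs. xs!i \<in> V) \<and> (\<forall>i. Suc i < length xs \<longrightarrow> E (xs!i) (xs!Suc i))"
proof (induction V E xs rule: is_walk.induct)
  case (1 V E) then show ?case by simp
next
  case (2 V E v) then show ?case by simp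
next
  case (3 V E u v xs)
  show ?case
    unfolding is_walk.simps 3
    apply (simp only: length_Cons)
    apply (auto simp: nth_Cons less_Suc_eq_0_disj split: nat.splits)
    done
qed

lemma walk_iff: "(\<exists>xs. walk_between V E u v xs \<and> length xs = Suc k) \<longleftrightarrow> pth V E k u v"
proof
  assume "\<exists>xs. walk_between V E u v xs \<and> length xs = Suc k"
  then obtain xs where w: "is_walk V E xs" "hd xs = u" "last xs = v" "length xs = Suc k"
    unfolding walk_between_def by blast
  have ne: "xs \<noteq> []" using w(4) by auto
  show "pth V E k u v" unfolding pth_def
  proof (intro exI[of _ "\<lambda>i. xs ! i"] conjI allI impI)
    show "xs ! 0 = u" using w(2) ne by (simp add: hd_conv_nth)
    show "xs ! k = v" using w(3) ne w(4) by (simp add: last_conv_nth)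
    fix i assume "i \<le> k" then show "xs ! i \<in> V" using w(1) w(4) by (simp add: is_walk_nth)
  next
    fix i assume "i < k" then show "E (xs!i) (xs ! Suc i)" using w(1) w(4) by (simp add: is_walk_nth)
  qed
next
  assume "pth V E k u v"
  then obtain p where p: "p 0 = u" "p k = v" "\<forall>i\<le>k. p i \<in> V" "\<forall>i<k. E (p i) (p (Suc i))"
    unfolding pth_def by blast
  let ?xs = "map p [0..<Suc k]"
  have "walk_between V E u v ?xs" unfolding walk_between_def is_walk_nth
    using p by (auto simp: hd_map last_map simp del: upt_Suc)
  moreover have "length ?xs = Suc k" by simp
  ultimately show "\<exists>xs. walk_between V E u v xs \<and> length xs = Suc k" by blast
qed

lemma gdist_pth: "gdist V E u v = (LEAST k. pth V E k u v)"
  unfolding gdist_def walk_iff ..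

locale cg =
  fixes V :: "'a set" and E :: "'a \<Rightarrow> 'a \<Rightarrow> bool"
  assumes sg: "simple_graph V E" and conn: "graph_connected V E"
begin

abbreviation "d \<equiv> gdist V E"

lemma finV: "finite V" using sg unfolding simple_graph_def by blast
lemma Emem: "E u v \<Longrightarrow> u \<in> V \<and> v \<in> V" using sg unfolding simple_graph_def by blast
lemma Esym: "E u v \<Longrightarrow> E v u" using sg unfolding simple_graph_def by blast
lemma Eirr: "\<not> E v v" using sg unfolding simple_graph_def by blast

lemma pth_mem: "pth V E k u v \<Longrightarrow> u \<in> V \<and> v \<in> V"
  unfolding pth_def by (metis le0 order_refl)

lemma pth_ex: assumes "u \<in> V" "v \<in> V" shows "\<exists>k. pth V E k u v"
proof -
  obtain xs where "walk_between V E u v xs" using conn assms unfolding graph_connected_def by blast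
  moreover have "xs \<noteq> []" using calculation unfolding walk_between_def by auto
  ultimately have "walk_between V E u v xs \<and> length xs = Suc (length xs - 1)" by simp
  then have "pth V E (length xs - 1) u v" using walk_iff[of V E u v "length xs - 1"] by blast
  then show ?thesis by blast
qed

lemma d_pth: assumes "u \<in> V" "v \<in> V" shows "pth V E (d u v) u v"
  unfolding gdist_pth using pth_ex[OF assms] by (rule LeastI_ex)

lemma d_le: "pth V E k u v \<Longrightarrow> d u v \<le> k"
  unfolding gdist_pth by (rule Least_le)

lemma pth_trans:
  assumes "pth V E a u v" "pth V E b v w" shows "pth V E (a+b) u w"
proof -
  obtain p where p: "p 0 = u" "p a = v" "\<forall>i\<le>a. p i \<in> V" "\<forall>i<a. E (p i) (p (Suc i))"
    using assms(1) unfolding pth_def by blast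
  obtain q where q: "q 0 = v" "q b = w" "\<forall>i\<le>b. q i \<in> V" "\<forall>i<b. E (q i) (q (Suc i))"
    using assms(2) unfolding pth_def by blast
  define r where "r = (\<lambda>i. if i \<le> a then p i else q (i - a))"
  have "r 0 = u" using p by (simp add: r_def)
  moreover have "r (a+b) = w" using p q by (cases "b = 0") (auto simp: r_def)
  moreover have "\<forall>i\<le>a+b. r i \<in> V" using p q by (auto simp: r_def)
  moreover have "\<forall>i<a+b. E (r i) (r (Suc i))"
  proof (intro allI impI)
    fix i assume i: "i < a + b"
    show "E (r i) (r (Suc i))"
    proof (cases "Suc i \<le> a")
      case True then show ?thesis using p by (auto simp: r_def)
    next
      case False
      then have "i \<ge> a" by simp
      then have "Suc i - a = Suc (i - a)" by simp
      then show ?thesis using q i False \<open>i \<ge> a\<close> p(2)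
        by (cases "i = a") (auto simp: r_def)
    qed
  qed
  ultimately show ?thesis unfolding pth_def by blast
qed

lemma pth_rev: assumes "pth V E k u v" shows "pth V E k v u"
proof -
  obtain p where p: "p 0 = u" "p k = v" "\<forall>i\<le>k. p i \<in> V" "\<forall>i<k. E (p i) (p (Suc i))"
    using assms unfolding pth_def by blast
  define r where "r = (\<lambda>i. p (k - i))"
  have "\<forall>i<k. E (r i) (r (Suc i))"
  proof (intro allI impI)
    fix i assume i: "i < k"
    then have "k - i = Suc (k - Suc i)" by simp
    moreover have "k - Suc i < k" using i by simp
    ultimately have "E (p (k - Suc i)) (p (k - i))" using p(4) by metis
    then show "E (r i) (r (Suc i))" using Esym unfolding r_def by blast
  qed
  moreover have "r 0 = v" "r k = u" using p by (auto simp: r_def)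
  moreover have "\<forall>i\<le>k. r i \<in> V" using p by (auto simp: r_def)
  ultimately show ?thesis unfolding pth_def by blast
qed

lemma d_sym: assumes "u \<in> V" "v \<in> V" shows "d u v = d v u"
  using d_le[OF pth_rev[OF d_pth[OF assms]]] d_le[OF pth_rev[OF d_pth[OF assms(2,1)]]] by simp

lemma d_tri: assumes "u \<in> V" "v \<in> V" "w \<in> V" shows "d u w \<le> d u v + d v w"
  using d_le[OF pth_trans[OF d_pth[OF assms(1,2)] d_pth[OF assms(2,3)]]] .

lemma d_refl: assumes "u \<in> V" shows "d u u = 0"
proof -
  have "pth V E 0 u u" unfolding pth_def using assms by (intro exI[of _ "\<lambda>_. u"]) auto
  then show ?thesis using d_le by fastforce
qed

lemma d_edge: assumes "E u v" shows "d u v \<le> 1"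
proof -
  have "pth V E 1 u v" unfolding pth_def using assms Emem[OF assms]
    by (intro exI[of _ "\<lambda>i. if i = 0 then u else v"]) auto
  then show ?thesis using d_le by blast
qed

lemma subpath:
  assumes "\<forall>i\<le>k. p i \<in> V" "\<forall>i<k. E (p i) (p (Suc i))" "i \<le> j" "j \<le> k"
  shows "pth V E (j - i) (p i) (p j)"
  unfolding pth_def using assms
  by (intro exI[of _ "\<lambda>t. p (i + t)"]) auto

lemma geodesic:
  assumes "u \<in> V" "w \<in> V"
  obtains p where "p 0 = u" "p (d u w) = w" "\<forall>i\<le>d u w. p i \<in> V" "\<forall>i<d u w. E (p i) (p (Suc i))"
    "\<And>i j. i \<le> j \<Longrightarrow> j \<le> d u w \<Longrightarrow> d (p i) (p j) = j - i"
proof -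
  let ?D = "d u w"
  obtain p where p: "p 0 = u" "p ?D = w" "\<forall>i\<le>?D. p i \<in> V" "\<forall>i<?D. E (p i) (p (Suc i))"
    using d_pth[OF assms] unfolding pth_def by blast
  have "d (p i) (p j) = j - i" if ij: "i \<le> j" "j \<le> ?D" for i j
  proof -
    have a: "d (p i) (p j) \<le> j - i" using d_le[OF subpath[OF p(3,4) ij]] .
    have b: "d u (p i) \<le> i" using d_le[OF subpath[OF p(3,4), of 0 i]] ij p(1) by simp
    have c: "d (p j) w \<le> ?D - j" using d_le[OF subpath[OF p(3,4), of j ?D]] ij p(2) by simp
    have V: "p i \<in> V" "p j \<in> V" using p(3) ij by auto
    have "?D \<le> d u (p i) + d (p i) w" by (rule d_tri[OF assms(1) V(1) assms(2)])
    also have "d (p i) w \<le> d (p i) (p j) + d (p j) w" by (rule d_tri[OF V assms(2)])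
    finally show ?thesis using a b c ij by linarith
  qed
  then show ?thesis using that p by blast
qed

end

lemma g_props:
  fixes k k' :: nat
  assumes "k < k'"
  shows "4 + 2*k - k mod 2 < 4 + 2*k' - k' mod 2"
    and "4 + 2*k' - k' mod 2 \<noteq> 4 + 2*k - k mod 2 + 2"
    and "4 + 2*k' - k' mod 2 = Suc (4 + 2*k - k mod 2) \<or> 4 + 2*k - k mod 2 + 3 \<le> 4 + 2*k' - k' mod 2"
proof -
  have a: "k mod 2 = 0 \<or> k mod 2 = 1" "k' mod 2 = 0 \<or> k' mod 2 = 1" by auto
  have b: "k' = Suc k \<or> k + 2 \<le> k'" using assms by auto
  have c: "k' = Suc k \<Longrightarrow> (k mod 2 = 0 \<longleftrightarrow> k' mod 2 = 1)" by (auto simp: mod_Suc)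
  show "4 + 2*k - k mod 2 < 4 + 2*k' - k' mod 2" using a b c assms by auto
  show "4 + 2*k' - k' mod 2 \<noteq> 4 + 2*k - k mod 2 + 2" using a b c by auto
  show "4 + 2*k' - k' mod 2 = Suc (4 + 2*k - k mod 2) \<or> 4 + 2*k - k mod 2 + 3 \<le> 4 + 2*k' - k' mod 2"
    using a b c by auto
qed
context cg
begin

definition Z where "Z u w = {z\<in>V. 3 \<le> d u z \<and> 3 \<le> d z w \<and> d u z + d z w \<le> d u w + 2}"

lemma Z_bound:
  assumes tf: "triangle_free V E" and u: "u \<in> V" and w: "w \<in> V"
  shows "min_degree V E * d u w \<le> 2 * card (Z u w) + 7 * min_degree V E"
proof -
  let ?dl = "min_degree V E"
  let ?D = "d u w"
  obtain p where p: "p 0 = u" "p ?D = w" "\<forall>i\<le>?D. p i \<in> V" "\<forall>i<?D. E (p i) (p (Suc i))"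
    and pd: "\<And>i j. i \<le> j \<Longrightarrow> j \<le> ?D \<Longrightarrow> d (p i) (p j) = j - i"
    using geodesic[OF u w] by blast
  define K where "K = (?D - 6) div 2"
  define g :: "nat \<Rightarrow> nat" where "g k = 4 + 2*k - k mod 2" for k
  define A where "A k = {z\<in>V. E (p (g k)) z}" for k
  have gK: "4 \<le> g k \<and> g k + 4 \<le> ?D" if "k < K" for k
  proof -
    have "2*k + 2 \<le> ?D - 6" using that unfolding K_def by linarith
    moreover have "k mod 2 \<le> 1" by auto
    ultimately show ?thesis unfolding g_def by linarith
  qed
  have AZ: "A k \<subseteq> Z u w" if k: "k < K" for k
  proof
    fix z assume z: "z \<in> A k"
    let ?j = "g k"
    have j: "4 \<le> ?j" "?j + 4 \<le> ?D" using gK[OF k] by auto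
    have zV: "z \<in> V" and ez: "E (p ?j) z" using z unfolding A_def by auto
    have pj: "p ?j \<in> V" using p(3) j by auto
    have d1: "d u (p ?j) = ?j" using pd[of 0 ?j] j p(1) by simp
    have d2: "d (p ?j) w = ?D - ?j" using pd[of ?j ?D] j p(2) by simp
    have e1: "d (p ?j) z \<le> 1" using d_edge[OF ez] .
    have e2: "d z (p ?j) \<le> 1" using e1 d_sym[OF pj zV] by simp
    have "d u (p ?j) \<le> d u z + d z (p ?j)" by (rule d_tri[OF u zV pj])
    moreover have "d (p ?j) w \<le> d (p ?j) z + d z w" by (rule d_tri[OF pj zV w])
    moreover have "d u z \<le> d u (p ?j) + d (p ?j) z" by (rule d_tri[OF u pj zV])
    moreover have "d z w \<le> d z (p ?j) + d (p ?j) w" by (rule d_tri[OF zV pj w])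
    ultimately show "z \<in> Z u w" unfolding Z_def using zV d1 d2 e1 e2 j by auto
  qed
  have disj: "A k \<inter> A k' = {}" if kk: "k < k'" "k' < K" for k k'
  proof (rule ccontr)
    assume "A k \<inter> A k' \<noteq> {}"
    then obtain z where z: "z \<in> V" "E (p (g k)) z" "E (p (g k')) z" unfolding A_def by auto
    let ?i = "g k" and ?j = "g k'"
    have gp: "?i < ?j" "?j \<noteq> ?i + 2" "?j = Suc ?i \<or> ?i + 3 \<le> ?j"
      using g_props[OF kk(1)] unfolding g_def by auto
    have jD: "?j \<le> ?D" using gK[OF kk(2)] by simp
    have V2: "p ?i \<in> V" "p ?j \<in> V" using p(3) jD gp by auto
    show False
    proof (cases "?j = Suc ?i")
      case True
      then have "E (p ?i) (p ?j)" using p(4) jD by auto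
      then show False using tf z V2 unfolding triangle_free_def
        by (meson Esym)
    next
      case False
      then have "?i + 3 \<le> ?j" using gp by auto
      then have "3 \<le> d (p ?i) (p ?j)" using pd[of ?i ?j] jD by simp
      moreover have "d (p ?i) (p ?j) \<le> d (p ?i) z + d z (p ?j)" by (rule d_tri[OF V2(1) z(1) V2(2)])
      moreover have "d (p ?i) z \<le> 1" using d_edge[OF z(2)] .
      moreover have "d z (p ?j) \<le> 1" using d_edge[OF Esym[OF z(3)]] .
      ultimately show False by linarith
    qed
  qed
  have cardA: "?dl \<le> card (A k)" if "k < K" for k
  proof -
    have "p (g k) \<in> V" using p(3) gK[OF that] by auto
    then have "?dl \<le> degree V E (p (g k))" unfolding min_degree_def
      using finV by (intro Min_le) auto
    then show ?thesis unfolding degree_def A_def .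
  qed
  have finA: "finite (A k)" for k using finV unfolding A_def by auto
  have "card (\<Union>k<K. A k) = (\<Sum>k<K. card (A k))"
    by (rule card_UN_disjoint) (use finA disj in \<open>auto simp: nat_neq_iff\<close>)
  also have "\<dots> \<ge> K * ?dl" using sum_mono[of "{..<K}" "\<lambda>_. ?dl" "\<lambda>k. card (A k)"] cardA by simp
  finally have c1: "K * ?dl \<le> card (\<Union>k<K. A k)" .
  have "card (\<Union>k<K. A k) \<le> card (Z u w)"
    by (rule card_mono) (use finV AZ in \<open>auto simp: Z_def\<close>)
  with c1 have "K * ?dl \<le> card (Z u w)" by simp
  moreover have "?D \<le> 2 * K + 7" unfolding K_def by simp
  ultimately have "?dl * ?D \<le> ?dl * (2*K + 7)" by simp
  also have "\<dots> = 2 * (K * ?dl) + 7 * ?dl" by (simp add: algebra_simps)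
  finally show ?thesis using \<open>K * ?dl \<le> card (Z u w)\<close> by linarith
qed

end

context cg
begin

definition Off where "Off = {(u,w). u \<in> V \<and> w \<in> V \<and> u \<noteq> w}"

lemma finOff: "finite Off"
proof -
  have "Off \<subseteq> V \<times> V" unfolding Off_def by auto
  then show ?thesis using finV finite_subset by blast
qed

lemma cardOff: "card Off = card V * card V - card V"
proof -
  have "Off = V \<times> V - (\<lambda>u. (u,u)) ` V" unfolding Off_def by auto
  moreover have "card ((\<lambda>u. (u,u)) ` V) = card V" by (rule card_image) (auto simp: inj_on_def)
  moreover have "(\<lambda>u. (u,u)) ` V \<subseteq> V \<times> V" by auto
  ultimately show ?thesis using finV by (simp add: card_Diff_subset card_cartesian_product)
qed

lemma wiener2: "2 * wiener V E = (\<Sum>x\<in>Off. d (fst x) (snd x))"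
proof -
  let ?P = "{{u, v} | u v. u \<in> V \<and> v \<in> V \<and> u \<noteq> v}"
  let ?t = "\<lambda>p. d (SOME u. u \<in> p) (SOME v. v \<in> p \<and> v \<noteq> (SOME u. u \<in> p))"
  let ?h = "\<lambda>x::'a\<times>'a. {fst x, snd x}"
  have tval: "?t {u,w} = d u w" if "u \<in> V" "w \<in> V" "u \<noteq> w" for u w
  proof -
    define a where "a = (SOME x. x \<in> {u,w})"
    have a: "a \<in> {u,w}" unfolding a_def by (rule someI) auto
    define b where "b = (SOME y. y \<in> {u,w} \<and> y \<noteq> a)"
    have b: "b \<in> {u,w} \<and> b \<noteq> a" unfolding b_def
      by (rule someI_ex) (use a that in auto)
    have "d a b = d u w" using a b d_sym that by auto
    then show ?thesis unfolding a_def b_def .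
  qed
  have img: "?h ` Off = ?P"
  proof
    show "?h ` Off \<subseteq> ?P"
    proof
      fix p assume "p \<in> ?h ` Off"
      then obtain a b where "p = {a,b}" "a \<in> V" "b \<in> V" "a \<noteq> b" unfolding Off_def by auto
      then show "p \<in> ?P" by blast
    qed
    show "?P \<subseteq> ?h ` Off"
    proof
      fix p assume "p \<in> ?P"
      then obtain u v where uv: "p = {u,v}" "u \<in> V" "v \<in> V" "u \<noteq> v" by blast
      then have "(u,v) \<in> Off" unfolding Off_def by simp
      then show "p \<in> ?h ` Off" using uv by force
    qed
  qed
  have "(\<Sum>x\<in>Off. d (fst x) (snd x)) = (\<Sum>p\<in>?h ` Off. \<Sum>x\<in>{x\<in>Off. ?h x = p}. d (fst x) (snd x))"
    by (rule sum.image_gen[OF finOff])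
  also have "\<dots> = (\<Sum>p\<in>?h ` Off. 2 * ?t p)"
  proof (rule sum.cong[OF refl])
    fix p assume "p \<in> ?h ` Off"
    then obtain u w where uw: "u \<in> V" "w \<in> V" "u \<noteq> w" "p = {u,w}" unfolding Off_def by auto
    have "{x\<in>Off. ?h x = p} = {(u,w),(w,u)}" using uw unfolding Off_def by (auto simp: doubleton_eq_iff)
    then have "(\<Sum>x\<in>{x\<in>Off. ?h x = p}. d (fst x) (snd x)) = d u w + d w u" using uw by simp
    also have "\<dots> = 2 * ?t p" using uw tval d_sym by simp
    finally show "(\<Sum>x\<in>{x\<in>Off. ?h x = p}. d (fst x) (snd x)) = 2 * ?t p" .
  qed
  also have "\<dots> = 2 * wiener V E" unfolding wiener_def img by (simp add: sum_distrib_left)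
  finally show ?thesis by simp
qed

end

context cg
begin

definition S where "S = (\<lambda>((u,w),z). (u,z,w)) ` (SIGMA x:Off. Z (fst x) (snd x))"
definition rot :: "'a \<times> 'a \<times> 'a \<Rightarrow> 'a \<times> 'a \<times> 'a" where "rot = (\<lambda>(a,b,c). (b,c,a))"
definition Q where "Q = {(a,b,c). a \<in> V \<and> b \<in> V \<and> c \<in> V \<and> 3 \<le> d a b \<and> 3 \<le> d b c \<and> 3 \<le> d c a}"

lemma memS: "(a,b,c) \<in> S \<longleftrightarrow> (a,c) \<in> Off \<and> b \<in> Z a c"
  unfolding S_def by force

lemma finZ: "finite (Z u w)" using finV unfolding Z_def by auto

lemma cardS: "card S = (\<Sum>x\<in>Off. card (Z (fst x) (snd x)))"
proof -
  have "inj_on (\<lambda>((u,w),z). (u,z,w)) (SIGMA x:Off. Z (fst x) (snd x))"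
    by (auto simp: inj_on_def)
  then have "card S = card (SIGMA x:Off. Z (fst x) (snd x))" unfolding S_def by (rule card_image)
  also have "\<dots> = (\<Sum>x\<in>Off. card (Z (fst x) (snd x)))" using finOff finZ by simp
  finally show ?thesis .
qed

lemma inj_rot: "inj rot" unfolding rot_def inj_def by auto

lemma S_Q: "S \<subseteq> Q"
proof
  fix x assume "x \<in> S"
  then obtain a b c where x: "x = (a,b,c)" "(a,c) \<in> Off" "b \<in> Z a c"
    by (metis memS prod_cases3)
  then have V: "a \<in> V" "b \<in> V" "c \<in> V" unfolding Off_def Z_def by auto
  have "3 \<le> d a b" "3 \<le> d b c" "d a b + d b c \<le> d a c + 2" using x unfolding Z_def by auto
  moreover have "d c a = d a c" using d_sym V by auto
  ultimately show "x \<in> Q" unfolding Q_def using x V by auto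
qed

lemma rot_Q: "x \<in> Q \<Longrightarrow> rot x \<in> Q"
  unfolding Q_def rot_def by auto

lemma disj1: "S \<inter> rot ` S = {}"
proof (rule ccontr)
  assume "S \<inter> rot ` S \<noteq> {}"
  then obtain u z w where a: "(u,z,w) \<in> S" "(u,z,w) \<in> rot ` S" by (metis disjoint_iff prod_cases3)
  then have b: "(w,u,z) \<in> S" unfolding rot_def by auto
  have V: "u \<in> V" "z \<in> V" "w \<in> V" using a(1) b unfolding memS Off_def by auto
  have "3 \<le> d u z" "d u z + d z w \<le> d u w + 2" using a(1) unfolding memS Z_def by auto
  moreover have "d w u + d u z \<le> d w z + 2" using b unfolding memS Z_def by auto
  moreover have "d w u = d u w" "d w z = d z w" using d_sym V by auto
  ultimately show False by linarith
qed

lemma disj2: "S \<inter> rot ` rot ` S = {}"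
proof (rule ccontr)
  assume "S \<inter> rot ` rot ` S \<noteq> {}"
  then obtain u z w where a: "(u,z,w) \<in> S" "(u,z,w) \<in> rot ` rot ` S" by (metis disjoint_iff prod_cases3)
  then have b: "(z,w,u) \<in> S" unfolding rot_def by auto
  have V: "u \<in> V" "z \<in> V" "w \<in> V" using a(1) b unfolding memS Off_def by auto
  have "d u z + d z w \<le> d u w + 2" using a(1) unfolding memS Z_def by auto
  moreover have "3 \<le> d z w" "d z w + d w u \<le> d z u + 2" using b unfolding memS Z_def by auto
  moreover have "d w u = d u w" "d z u = d u z" using d_sym V by auto
  ultimately show False by linarith
qed

lemma three_S: "3 * card S \<le> card Q"
proof -
  have finS: "finite S" unfolding S_def using finOff finZ by auto
  have c1: "card (rot ` S) = card S" "card (rot ` rot ` S) = card S"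
    using inj_rot by (auto simp: card_image inj_on_subset)
  have d3: "rot ` S \<inter> rot ` rot ` S = {}"
    using disj1 inj_rot by (metis image_Int image_empty)
  have "card (S \<union> rot ` S \<union> rot ` rot ` S) = card S + card (rot ` S) + card (rot ` rot ` S)"
  proof -
    have "(S \<union> rot ` S) \<inter> rot ` rot ` S = {}" using disj2 d3 by blast
    then have "card (S \<union> rot ` S \<union> rot ` rot ` S) = card (S \<union> rot ` S) + card (rot ` rot ` S)"
      using finS by (intro card_Un_disjoint) auto
    moreover have "card (S \<union> rot ` S) = card S + card (rot ` S)"
      using finS disj1 by (intro card_Un_disjoint) auto
    ultimately show ?thesis by simp
  qed
  moreover have "S \<union> rot ` S \<union> rot ` rot ` S \<subseteq> Q" using S_Q rot_Q by blast
  moreover have "finite Q"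
  proof -
    have "Q \<subseteq> V \<times> V \<times> V" unfolding Q_def by auto
    then show ?thesis using finV finite_subset by blast
  qed
  ultimately have "card S + card (rot ` S) + card (rot ` rot ` S) \<le> card Q"
    by (metis card_mono)
  then show ?thesis using c1 by simp
qed

end

context cg
begin

lemma Q_bound:
  assumes v0: "v0 \<in> V"
  shows "card Q \<le> (card V - (degree V E v0 + 1))^3 + 3 * (degree V E v0 + 1) * (card V - (degree V E v0 + 1))^2"
    and "degree V E v0 + 1 \<le> card V"
proof -
  define X where "X = insert v0 {y\<in>V. E v0 y}"
  define Y where "Y = V - X"
  have XV: "X \<subseteq> V" unfolding X_def using v0 by auto
  have cX: "card X = degree V E v0 + 1"
    unfolding X_def degree_def using finV Eirr by (subst card_insert_disjoint) auto
  have finX: "finite X" using XV finV finite_subset by blast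
  show le: "degree V E v0 + 1 \<le> card V" using cX card_mono[OF finV XV] by simp
  have cY: "card Y = card V - (degree V E v0 + 1)"
    unfolding Y_def using card_Diff_subset[OF finX XV] cX by simp
  have Xd: "d x y \<le> 2" if "x \<in> X" "y \<in> X" for x y
  proof -
    have a: "d x v0 \<le> 1" if "x \<in> X" for x
    proof (cases "x = v0")
      case True then show ?thesis using d_refl v0 by simp
    next
      case False then have "E v0 x" "x \<in> V" using that unfolding X_def by auto
      then show ?thesis using d_edge[OF Esym[OF \<open>E v0 x\<close>]] by simp
    qed
    have "d v0 y \<le> 1" using a[OF that(2)] d_sym v0 XV that(2) by auto
    moreover have "d x y \<le> d x v0 + d v0 y" using d_tri v0 XV that by auto
    ultimately show ?thesis using a[OF that(1)] by linarith
  qed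
  have "Q \<subseteq> (Y \<times> Y \<times> Y) \<union> (X \<times> Y \<times> Y) \<union> (Y \<times> X \<times> Y) \<union> (Y \<times> Y \<times> X)"
  proof
    fix x assume "x \<in> Q"
    then obtain a b c where x: "x = (a,b,c)" "a \<in> V" "b \<in> V" "c \<in> V" "3 \<le> d a b" "3 \<le> d b c" "3 \<le> d c a"
      unfolding Q_def by auto
    have n1: "\<not> (a \<in> X \<and> b \<in> X)" using Xd[of a b] x(5) by auto
    have n2: "\<not> (b \<in> X \<and> c \<in> X)" using Xd[of b c] x(6) by auto
    have n3: "\<not> (c \<in> X \<and> a \<in> X)" using Xd[of c a] x(7) by auto
    then show "x \<in> (Y \<times> Y \<times> Y) \<union> (X \<times> Y \<times> Y) \<union> (Y \<times> X \<times> Y) \<union> (Y \<times> Y \<times> X)"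
      using x(1-4) n1 n2 n3 unfolding Y_def by blast
  qed
  moreover have "finite Y" unfolding Y_def using finV by auto
  ultimately have "card Q \<le> card ((Y \<times> Y \<times> Y) \<union> (X \<times> Y \<times> Y) \<union> (Y \<times> X \<times> Y) \<union> (Y \<times> Y \<times> X))"
    using finX by (intro card_mono) auto
  also have "\<dots> \<le> card (Y \<times> Y \<times> Y) + card (X \<times> Y \<times> Y) + card (Y \<times> X \<times> Y) + card (Y \<times> Y \<times> X)"
  proof -
    have "card ((Y \<times> Y \<times> Y) \<union> (X \<times> Y \<times> Y) \<union> (Y \<times> X \<times> Y) \<union> (Y \<times> Y \<times> X))
      \<le> card ((Y \<times> Y \<times> Y) \<union> (X \<times> Y \<times> Y) \<union> (Y \<times> X \<times> Y)) + card (Y \<times> Y \<times> X)" by (rule card_Un_le)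
    moreover have "card ((Y \<times> Y \<times> Y) \<union> (X \<times> Y \<times> Y) \<union> (Y \<times> X \<times> Y))
      \<le> card ((Y \<times> Y \<times> Y) \<union> (X \<times> Y \<times> Y)) + card (Y \<times> X \<times> Y)" by (rule card_Un_le)
    moreover have "card ((Y \<times> Y \<times> Y) \<union> (X \<times> Y \<times> Y)) \<le> card (Y \<times> Y \<times> Y) + card (X \<times> Y \<times> Y)" by (rule card_Un_le)
    ultimately show ?thesis by linarith
  qed
  also have "\<dots> = card Y ^ 3 + 3 * card X * card Y ^ 2"
    by (simp add: card_cartesian_product power2_eq_square power3_eq_cube)
  finally show "card Q \<le> (card V - (degree V E v0 + 1))^3 + 3 * (degree V E v0 + 1) * (card V - (degree V E v0 + 1))^2"
    using cX cY by simp
qed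

end

lemma poly_ineq:
  fixes m D dl :: nat
  assumes "dl \<ge> 3"
  shows "m^2 * (m + 3*D + 3) \<le> (m+1+dl) * (m+1+dl - 1) * (m + D + 1 + 2*D)"
proof -
  have e: "(m+4)*(m+3)*(m+3*D+1) = m^2 * (m + 3*D + 3) + (5*m^2 + 21*m*D + 19*m + 36*D + 12)"
    by (simp add: algebra_simps power2_eq_square)
  have "m^2 * (m + 3*D + 3) \<le> (m+4)*(m+3)*(m+3*D+1)" using e by simp
  also have "\<dots> \<le> (m+1+dl) * (m+1+dl - 1) * (m + D + 1 + 2*D)"
    using assms by (intro mult_le_mono) auto
  finally show ?thesis .
qed

lemma choose2: "2 * (n choose 2) = n * (n - 1)"
  by (induction n) (auto simp: choose_two)

theorem theorem5p1:
  fixes V :: "'a set" and E :: "'a \<Rightarrow> 'a \<Rightarrow> bool"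
  assumes "simple_graph V E"
    and "graph_connected V E"
    and "triangle_free V E"
    and "card V \<ge> 2"
    and "min_degree V E \<ge> 3"
  shows "avg_dist V E \<le>
    2 / 3 * (real (card V - max_degree V E + min_degree V E)
              * (real (card V - max_degree V E + min_degree V E) - 1)
             / (real (card V) * (real (card V) - 1)))
      * ((real (card V) + 2 * real (max_degree V E)) / real (min_degree V E)) + 7"
proof -
  interpret cg V E using assms(1,2) by unfold_locales
  define n where "n = card V"
  define dl where "dl = min_degree V E"
  define D where "D = max_degree V E"
  define W where "W = wiener V E"
  have Vne: "V \<noteq> {}" using assms(4) by auto
  obtain v0 where v0: "v0 \<in> V" "degree V E v0 = D"
  proof -
    have "Max (degree V E ` V) \<in> degree V E ` V" using finV Vne by (intro Max_in) auto
    then show ?thesis using that unfolding D_def max_degree_def by auto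
  qed
  define m where "m = n - (D + 1)"
  have Dn: "D + 1 \<le> n" using Q_bound(2)[OF v0(1)] v0 unfolding n_def by simp
  have Qb: "card Q \<le> m^3 + 3*(D+1)*m^2" using Q_bound(1)[OF v0(1)] v0 unfolding m_def n_def by simp
  have "dl * (2 * W) = (\<Sum>x\<in>Off. dl * d (fst x) (snd x))"
    unfolding W_def wiener2 by (simp add: sum_distrib_left)
  also have "\<dots> \<le> (\<Sum>x\<in>Off. 2 * card (Z (fst x) (snd x)) + 7 * dl)"
  proof (rule sum_mono)
    fix x assume "x \<in> Off"
    then show "dl * d (fst x) (snd x) \<le> 2 * card (Z (fst x) (snd x)) + 7 * dl"
      unfolding dl_def using Z_bound[OF assms(3)] unfolding Off_def by auto
  qed
  also have "\<dots> = 2 * card S + 7 * dl * card Off"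
    by (simp add: sum.distrib sum_distrib_left cardS)
  finally have h1: "dl * (2 * W) \<le> 2 * card S + 7 * dl * card Off" .
  have h2: "3 * card S \<le> m^3 + 3*(D+1)*m^2" using three_S Qb by linarith
  have cO: "card Off = n * (n - 1)" using cardOff unfolding n_def by (simp add: algebra_simps)
  have h3: "6 * dl * W \<le> 2 * (m^3 + 3*(D+1)*m^2) + 21 * dl * (n * (n-1))"
  proof -
    have a: "6 * dl * W = 3 * (dl * (2 * W))" by simp
    have b: "21 * dl * (n * (n-1)) = 3 * (7 * dl * card Off)" using cO by simp
    have lin: "\<And>x c y M :: nat. x \<le> 2*c + y \<Longrightarrow> 3*c \<le> M \<Longrightarrow> 3*x \<le> 2*M + 3*y" by linarith
    show ?thesis unfolding a b by (rule lin[OF h1 h2])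
  qed
  define N where "N = n - D + dl"
  have Nm: "N = m + 1 + dl" unfolding N_def m_def using Dn by simp
  have nm: "n = m + D + 1" unfolding m_def using Dn by simp
  have dl3: "dl \<ge> 3" using assms(5) unfolding dl_def .
  have P: "m^2 * (m + 3*D + 3) \<le> N * (N - 1) * (n + 2*D)"
    using poly_ineq[OF dl3, of m D] unfolding Nm nm .
  have h4: "6 * dl * W \<le> 2 * (N * (N - 1) * (n + 2*D)) + 21 * dl * (n * (n-1))"
  proof -
    have "m^3 + 3*(D+1)*m^2 = m^2 * (m + 3*D + 3)" by (simp add: algebra_simps power2_eq_square power3_eq_cube)
    then have "m^3 + 3*(D+1)*m^2 \<le> N * (N - 1) * (n + 2*D)" using P by simp
    then show ?thesis using h3 by (meson add_le_mono le_refl mult_le_mono2 order_trans)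
  qed
  have n2: "n \<ge> 2" using assms(4) unfolding n_def .
  have N1: "N \<ge> 1" using Nm by simp
  have rh4: "6 * real dl * real W \<le> 2 * (real N * (real N - 1) * (real n + 2 * real D)) + 21 * real dl * (real n * (real n - 1))"
  proof -
    have "real (6 * dl * W) \<le> real (2 * (N * (N - 1) * (n + 2*D)) + 21 * dl * (n * (n-1)))"
      using h4 by (rule of_nat_mono)
    then show ?thesis using N1 n2 by (simp add: of_nat_diff)
  qed
  have cn: "real (n choose 2) = real n * (real n - 1) / 2"
  proof -
    have "real (2 * (n choose 2)) = real (n * (n - 1))" by (simp only: choose2)
    then show ?thesis using n2 by (simp add: of_nat_diff)
  qed
  have pos: "real n * (real n - 1) > 0" "real dl > 0" using n2 dl3 by auto
  have "avg_dist V E = 2 * real W / (real n * (real n - 1))"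
    unfolding avg_dist_def W_def[symmetric] n_def[symmetric] cn by simp
  also have "\<dots> = 6 * real dl * real W / (3 * real dl * (real n * (real n - 1)))"
  proof -
    have "(3 * real dl) * (2 * real W) / ((3 * real dl) * (real n * (real n - 1))) = 2 * real W / (real n * (real n - 1))"
      using pos by (intro mult_divide_mult_cancel_left) auto
    then show ?thesis by (simp add: mult.assoc)
  qed
  also have "\<dots> \<le> (2 * (real N * (real N - 1) * (real n + 2 * real D)) + 21 * real dl * (real n * (real n - 1)))
                 / (3 * real dl * (real n * (real n - 1)))"
    using rh4 pos by (intro divide_right_mono) auto
  also have "\<dots> = 2 / 3 * (real N * (real N - 1) / (real n * (real n - 1))) * ((real n + 2 * real D) / real dl) + 7"
  proof -
    have gen: "\<And>a b y z :: real. a > 0 \<Longrightarrow> b > 0 \<Longrightarrow> (2*(y*z) + 21*b*a)/(3*b*a) = 2/3*(y/a)*(z/b) + 7"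
      by (simp add: field_simps)
    show ?thesis using gen[OF pos(1) pos(2), of "real N * (real N - 1)" "real n + 2 * real D"]
      by (simp add: mult.assoc)
  qed
  finally show ?thesis unfolding N_def n_def D_def dl_def .
qed

end
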